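(* Let $\mathcal{Z}=\mathcal{X}\times\mathcal{Y}$, $\mathcal{H}$ a set of hypotheses $h:\mathcal{X}\to\mathcal{Y}$, $n\in\mathbb{N}$, $\mathcal{D}$ a distribution on $\mathcal{Z}$, $S\sim\mathcal{D}^n$, and let $\mathcal{A}$ be a learning algorithm given by a Markov kernel $\mathcal{P}_{H|S}$, $H=\mathcal{A}(S)$, with $\mathcal{P}_{SH}\ll\mathcal{P}_S\mathcal{P}_H$. Consider the $0$-$1$ loss. Then for every $h\in\mathcal{H}$ and $\eta>0$, $\mathbb{P}_{S\sim\mathcal{D}^n}(|L_S(h)-L_{\mathcal{D}}(h)|>\eta)\le2\exp(-2\eta^2n)$, and $$\mathbb{E}\left[|L_S(H)-L_{\mathcal{D}}(H)|\right]\le\frac{1}{\sqrt{2n}}\left(\sqrt{\log2+\mathcal{L}(S\to\mathcal{A}(S))}+\frac{1}{2\sqrt{\log2+\mathcal{L}(S\to\mathcal{A}(S))}}\right).$$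
   Context: The $0$-$1$ loss is $\ell(h,(x,y))=\mathbb{1}_{h(x)\ne y}$; $L_{\mathcal{D}}(h)=\mathcal{D}(\{(x,y):h(x)\ne y\})$, and for $s=((x_i,y_i))_{i=1}^n$, $L_s(h)=\frac1n\sum_{i=1}^n\mathbb{1}_{h(x_i)\ne y_i}$. The maximal leakage from $S$ to $H$ is $\mathcal{L}(S\to H)=\log\mathbb{E}_{\mathcal{P}_H}\left[\operatorname*{ess\,sup}_{\mathcal{P}_S}f(\cdot,H)\right]$ with $f=\frac{d\mathcal{P}_{SH}}{d\mathcal{P}_S\mathcal{P}_H}$, the essential supremum over the first argument taken with respect to $\mathcal{P}_S$ (this is Sibson's mutual information of order $\infty$). Logarithms are natural. *)

theory Defs
  imports "HOL-Probability.Probability"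
begin

definition zero_one_loss :: "('x \<Rightarrow> 'y) \<Rightarrow> 'x \<times> 'y \<Rightarrow> real" where
  "zero_one_loss h z = (if h (fst z) \<noteq> snd z then 1 else 0)"

definition true_risk :: "('x \<times> 'y) measure \<Rightarrow> ('x \<Rightarrow> 'y) \<Rightarrow> real" where
  "true_risk D h = measure D {z \<in> space D. h (fst z) \<noteq> snd z}"

definition emp_risk :: "nat \<Rightarrow> (nat \<Rightarrow> 'x \<times> 'y) \<Rightarrow> ('x \<Rightarrow> 'y) \<Rightarrow> real" where
  "emp_risk n s h = (\<Sum>i<n. zero_one_loss h (s i)) / real n"

definition sample_dist :: "nat \<Rightarrow> ('x \<times> 'y) measure \<Rightarrow> (nat \<Rightarrow> 'x \<times> 'y) measure" where
  "sample_dist n D = PiM {..<n} (\<lambda>_. D)"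

text \<open>Joint distribution P_SH of (S, H) for the kernel K = P_{H|S}.\<close>
definition joint_dist :: "'s measure \<Rightarrow> 'h measure \<Rightarrow> ('s \<Rightarrow> 'h measure) \<Rightarrow> ('s \<times> 'h) measure" where
  "joint_dist PS HS K = PS \<bind> (\<lambda>s. K s \<bind> (\<lambda>h. return (PS \<Otimes>\<^sub>M HS) (s, h)))"

definition output_dist :: "'s measure \<Rightarrow> ('s \<Rightarrow> 'h measure) \<Rightarrow> 'h measure" where
  "output_dist PS K = PS \<bind> K"

text \<open>exp of the maximal leakage:
  E_{P_H}[ess sup_{P_S} f(., H)] with f = dP_SH / d(P_S x P_H).\<close>
definition exp_max_leakage :: "'s measure \<Rightarrow> 'h measure \<Rightarrow> ('s \<Rightarrow> 'h measure) \<Rightarrow> ennreal" where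
  "exp_max_leakage PS HS K =
     (\<integral>\<^sup>+ h. esssup PS (\<lambda>s. RN_deriv (PS \<Otimes>\<^sub>M output_dist PS K) (joint_dist PS HS K) (s, h))
        \<partial>output_dist PS K)"

text \<open>Maximal leakage L(S -> H) (natural log); meaningful when exp_max_leakage is finite.\<close>
definition max_leakage :: "'s measure \<Rightarrow> 'h measure \<Rightarrow> ('s \<Rightarrow> 'h measure) \<Rightarrow> real" where
  "max_leakage PS HS K = ln (enn2real (exp_max_leakage PS HS K))"

end

theory Submission imports Defs "HOL-Real_Asymp.Real_Asymp" begin

lemma true_risk_integral:
  assumes D: "prob_space D" and lm: "(\<lambda>z. zero_one_loss h z) \<in> borel_measurable D"
  shows "true_risk D h = (\<integral>z. zero_one_loss h z \<partial>D)"
proof -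
  interpret D: prob_space D by fact
  define A where "A = {z \<in> space D. h (fst z) \<noteq> snd z}"
  have A: "A \<in> sets D"
  proof -
    have "A = (\<lambda>z. zero_one_loss h z) -` {1} \<inter> space D"
      by (auto simp: A_def zero_one_loss_def)
    then show ?thesis using lm by (simp add: measurable_sets)
  qed
  have "(\<integral>z. zero_one_loss h z \<partial>D) = (\<integral>z. indicator A z \<partial>D)"
    by (intro Bochner_Integration.integral_cong) (auto simp: A_def zero_one_loss_def indicator_def)
  also have "\<dots> = measure D A" using A by simp
  finally show ?thesis by (simp add: true_risk_def A_def)
qed

lemma hoeff:
  fixes D :: "('x \<times> 'y) measure" and h :: "'x \<Rightarrow> 'y"
  assumes D: "prob_space D" and n: "n > 0"
    and lm: "(\<lambda>z. zero_one_loss h z) \<in> borel_measurable D" and \<eta>: "\<eta> > 0"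
  shows "prob_space.prob (sample_dist n D)
              {s \<in> space (sample_dist n D). \<bar>emp_risk n s h - true_risk D h\<bar> > \<eta>}
            \<le> 2 * exp (- 2 * \<eta>\<^sup>2 * real n)"
proof -
  interpret D: prob_space D by fact
  define PS where "PS = sample_dist n D"
  have PSp: "prob_space PS" unfolding PS_def sample_dist_def
    by (intro prob_space_PiM) (simp add: D)
  interpret S: prob_space PS by fact
  define X :: "nat \<Rightarrow> (nat \<Rightarrow> 'x \<times> 'y) \<Rightarrow> real" where "X = (\<lambda>i s. zero_one_loss h (s i))"
  have compD: "i < n \<Longrightarrow> distr PS D (\<lambda>s. s i) = D" for i
    unfolding PS_def sample_dist_def by (rule distr_PiM_component) (auto simp: D)
  have Xm: "i < n \<Longrightarrow> X i \<in> borel_measurable PS" for i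
    unfolding X_def 
    by (rule measurable_compose[OF _ lm]) (unfold PS_def sample_dist_def, rule measurable_component_singleton, simp)
  have distrX: "i < n \<Longrightarrow> distr PS borel (X i) = distr D borel (\<lambda>z. zero_one_loss h z)" for i
  proof -
    assume i: "i < n"
    have "distr D borel (\<lambda>z. zero_one_loss h z) = distr (distr PS D (\<lambda>s. s i)) borel (\<lambda>z. zero_one_loss h z)"
      using compD[OF i] by simp
    also have "\<dots> = distr PS borel (X i)"
      by (subst distr_distr) (use lm i in \<open>auto simp: X_def comp_def PS_def sample_dist_def\<close>)
    finally show ?thesis by simp
  qed
  have indep0: "S.indep_vars (\<lambda>_. D) (\<lambda>i s. s i) {..<n}"
  proof (subst S.indep_vars_iff_distr_eq_PiM')
    show "{..<n} \<noteq> {}" using n by auto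
    show "(\<lambda>s. s i) \<in> measurable PS D" if "i \<in> {..<n}" for i
      using that by (auto simp: PS_def sample_dist_def intro!: measurable_component_singleton)
    have "distr PS (\<Pi>\<^sub>M i\<in>{..<n}. D) (\<lambda>x. \<lambda>i\<in>{..<n}. x i) = distr PS PS (\<lambda>x. x)"
      by (intro distr_cong) (auto simp: PS_def sample_dist_def space_PiM PiE_def extensional_restrict)
    also have "\<dots> = PS" by simp
    also have "PS = (\<Pi>\<^sub>M i\<in>{..<n}. distr PS D (\<lambda>s. s i))"
      unfolding PS_def sample_dist_def
      by (intro PiM_cong refl) (simp add: compD[unfolded PS_def sample_dist_def])
    finally show "distr PS (\<Pi>\<^sub>M i\<in>{..<n}. D) (\<lambda>x. \<lambda>i\<in>{..<n}. x i) = (\<Pi>\<^sub>M i\<in>{..<n}. distr PS D (\<lambda>s. s i))" .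
  qed
  have indep: "S.indep_vars (\<lambda>_. borel) X {..<n}"
    unfolding X_def using S.indep_vars_compose2[OF indep0, of "\<lambda>_ z. zero_one_loss h z" "\<lambda>_. borel"] lm
    by simp
  interpret II: iid_interval_bounded_random_variables PS "{..<n}" X "X 0" 0 1
  proof
    show "finite {..<n}" by simp
    show "S.indep_vars (\<lambda>_. borel) X {..<n}" by (rule indep)
    show "distr PS borel (X i) = distr PS borel (X 0)" if "i \<in> {..<n}" for i
      using distrX[of i] distrX[of 0] that n by simp
    show "X 0 \<in> borel_measurable PS" using Xm n by simp
    show "AE x in PS. X 0 x \<in> {0..1}" by (auto simp: X_def zero_one_loss_def)
  qed
  interpret HI: Hoeffding_ineq_iid PS "{..<n}" X "X 0" 0 1 "S.expectation (X 0)"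
    by unfold_locales
  have mu: "S.expectation (X 0) = true_risk D h"
  proof -
    have "S.expectation (X 0) = (\<integral>z. zero_one_loss h z \<partial>distr PS D (\<lambda>s. s 0))"
      by (subst integral_distr) (use lm n in \<open>auto simp: X_def PS_def sample_dist_def\<close>)
    also have "\<dots> = true_risk D h" using compD[of 0] n true_risk_integral[OF D lm] by simp
    finally show ?thesis .
  qed
  have "S.prob {s \<in> space PS. \<bar>emp_risk n s h - true_risk D h\<bar> > \<eta>}
      \<le> S.prob {s \<in> space PS. \<bar>(\<Sum>i\<in>{..<n}. X i s) / real (card {..<n}) - S.expectation (X 0)\<bar> \<ge> \<eta>}"
  proof (rule S.finite_measure_mono)
    show "{s \<in> space PS. \<bar>emp_risk n s h - true_risk D h\<bar> > \<eta>} \<subseteq> {s \<in> space PS. \<bar>(\<Sum>i\<in>{..<n}. X i s) / real (card {..<n}) - S.expectation (X 0)\<bar> \<ge> \<eta>}"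
      using mu by (auto simp: emp_risk_def X_def)
    show "{s \<in> space PS. \<bar>(\<Sum>i\<in>{..<n}. X i s) / real (card {..<n}) - S.expectation (X 0)\<bar> \<ge> \<eta>} \<in> sets PS"
      using Xm by measurable
  qed
  also have "\<dots> \<le> 2 * exp (-2 * real (card {..<n}) * \<eta>\<^sup>2 / (1 - 0)\<^sup>2)"
    by (rule HI.Hoeffding_ineq_abs_ge') (use \<eta> n in auto)
  finally show ?thesis by (simp add: PS_def mult_ac)
qed


lemma ennreal_mul_div_aux: "0 < (d::real) \<Longrightarrow> (m::ennreal) = ennreal d * (m / ennreal d)"
  by (simp add: ennreal_mult_divide_eq ennreal_times_divide mult.commute)

lemma leak_bound:
  fixes PS :: "'s measure" and PH :: "'h measure" and PSH :: "('s \<times> 'h) measure"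
  assumes PS: "prob_space PS" and PH: "prob_space PH"
    and sets: "sets PSH = sets (PS \<Otimes>\<^sub>M PH)"
    and ac: "absolutely_continuous (PS \<Otimes>\<^sub>M PH) PSH"
    and E: "E \<in> sets (PS \<Otimes>\<^sub>M PH)"
    and \<delta>: "\<delta> > 0"
    and sec: "\<And>h. h \<in> space PH \<Longrightarrow> emeasure PS {s\<in>space PS. (s,h) \<in> E} \<le> ennreal \<delta>"
  shows "emeasure PSH E \<le> ennreal \<delta> * (\<integral>\<^sup>+ h. esssup PS (\<lambda>s. RN_deriv (PS \<Otimes>\<^sub>M PH) PSH (s,h)) \<partial>PH)"
proof -
  interpret S: prob_space PS by fact
  interpret H: prob_space PH by fact
  interpret P: pair_sigma_finite PS PH ..
  have sf: "sigma_finite_measure (PS \<Otimes>\<^sub>M PH)" using prob_space_pair[OF PS PH] by (simp add: prob_space_imp_sigma_finite)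
  define f where "f = RN_deriv (PS \<Otimes>\<^sub>M PH) PSH"
  define g where "g h = esssup PS (\<lambda>s. f (s,h))" for h
  have fm[measurable]: "f \<in> borel_measurable (PS \<Otimes>\<^sub>M PH)" unfolding f_def by simp
  note E[measurable]
  define m where "m h = (\<integral>\<^sup>+ s. f (s,h) * indicator E (s,h) \<partial>PS)" for h
  have mm[measurable]: "m \<in> borel_measurable PH" unfolding m_def by measurable
  have "emeasure PSH E = emeasure (density (PS \<Otimes>\<^sub>M PH) f) E"
    using sigma_finite_measure.density_RN_deriv[OF sf ac sets] f_def by simp
  also have "\<dots> = (\<integral>\<^sup>+ z. f z * indicator E z \<partial>(PS \<Otimes>\<^sub>M PH))"
    by (rule emeasure_density) (use E in auto)
  also have "\<dots> = (\<integral>\<^sup>+ h. m h \<partial>PH)"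
    unfolding m_def by (rule P.nn_integral_snd[symmetric]) measurable
  also have "\<dots> = (\<integral>\<^sup>+ h. ennreal \<delta> * (m h / ennreal \<delta>) \<partial>PH)"
    using \<delta> by (intro nn_integral_cong) (rule ennreal_mul_div_aux)
  also have "\<dots> = ennreal \<delta> * (\<integral>\<^sup>+ h. m h / ennreal \<delta> \<partial>PH)"
    by (rule nn_integral_cmult) measurable
  also have "\<dots> \<le> ennreal \<delta> * (\<integral>\<^sup>+ h. g h \<partial>PH)"
  proof (intro mult_left_mono nn_integral_mono)
    fix h assume h: "h \<in> space PH"
    have "m h \<le> (\<integral>\<^sup>+ s. g h * indicator {s\<in>space PS. (s,h) \<in> E} s \<partial>PS)"
      unfolding m_def
    proof (rule nn_integral_mono_AE)
      show "AE s in PS. f (s, h) * indicator E (s, h) \<le> g h * indicator {s \<in> space PS. (s, h) \<in> E} s"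
        using esssup_AE[of "\<lambda>s. f (s,h)" PS] AE_space unfolding g_def
        by eventually_elim (auto simp: indicator_def)
    qed
    also have "\<dots> = g h * emeasure PS {s\<in>space PS. (s,h) \<in> E}"
      by (rule nn_integral_cmult_indicator) (use h in measurable)
    also have "\<dots> \<le> g h * ennreal \<delta>"
      by (intro mult_left_mono sec h) simp
    finally have "m h \<le> g h * ennreal \<delta>" .
    then show "m h / ennreal \<delta> \<le> g h"
      using \<delta> by (simp add: divide_le_posI_ennreal mult.commute) 
  qed simp
  finally show ?thesis unfolding g_def f_def .
qed


theorem corollary7:
  fixes D :: "('x \<times> 'y) measure"
    and HS :: "('x \<Rightarrow> 'y) measure"
    and K :: "(nat \<Rightarrow> 'x \<times> 'y) \<Rightarrow> ('x \<Rightarrow> 'y) measure"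
    and n :: nat
  assumes D: "prob_space D"
    and n: "n > 0"
    and loss_meas: "(\<lambda>(h, z). zero_one_loss h z) \<in> borel_measurable (HS \<Otimes>\<^sub>M D)"
    and K: "K \<in> measurable (sample_dist n D) (prob_algebra HS)"
    and ac: "absolutely_continuous (sample_dist n D \<Otimes>\<^sub>M output_dist (sample_dist n D) K)
               (joint_dist (sample_dist n D) HS K)"
  shows "(\<forall>h \<in> space HS. \<forall>\<eta>::real. \<eta> > 0 \<longrightarrow>
            prob_space.prob (sample_dist n D)
              {s \<in> space (sample_dist n D). \<bar>emp_risk n s h - true_risk D h\<bar> > \<eta>}
            \<le> 2 * exp (- 2 * \<eta>\<^sup>2 * real n))
       \<and> (exp_max_leakage (sample_dist n D) HS K = \<infinity> \<or>
          (\<integral>p. \<bar>emp_risk n (fst p) (snd p) - true_risk D (snd p)\<bar> \<partial>joint_dist (sample_dist n D) HS K)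
          \<le> 1 / sqrt (2 * real n) *
             (sqrt (ln 2 + max_leakage (sample_dist n D) HS K)
              + 1 / (2 * sqrt (ln 2 + max_leakage (sample_dist n D) HS K))))"
proof -
  interpret D: prob_space D by fact
  have lm: "(\<lambda>z. zero_one_loss h z) \<in> borel_measurable D" if h: "h \<in> space HS" for h
    using measurable_compose[OF measurable_Pair1'[OF h] loss_meas] by simp
  have part1: "\<forall>h \<in> space HS. \<forall>\<eta>::real. \<eta> > 0 \<longrightarrow>
            prob_space.prob (sample_dist n D)
              {s \<in> space (sample_dist n D). \<bar>emp_risk n s h - true_risk D h\<bar> > \<eta>}
            \<le> 2 * exp (- 2 * \<eta>\<^sup>2 * real n)"
    using hoeff[OF D n lm] by blast
  define PS where "PS = sample_dist n D"
  have PSp: "prob_space PS" unfolding PS_def sample_dist_def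
    by (intro prob_space_PiM) (simp add: D)
  interpret S: prob_space PS by fact
  have Km: "K \<in> PS \<rightarrow>\<^sub>M prob_algebra HS" using K by (simp add: PS_def)
  define Q where "Q = (\<lambda>s. K s \<bind> (\<lambda>h. return (PS \<Otimes>\<^sub>M HS) (s, h)))"
  have ret: "(\<lambda>(s, h). return (PS \<Otimes>\<^sub>M HS) (s, h)) \<in> PS \<Otimes>\<^sub>M HS \<rightarrow>\<^sub>M prob_algebra (PS \<Otimes>\<^sub>M HS)"
    using measurable_return_prob_space[of "PS \<Otimes>\<^sub>M HS"] by (simp add: case_prod_eta)
  have Qm: "Q \<in> PS \<rightarrow>\<^sub>M prob_algebra (PS \<Otimes>\<^sub>M HS)"
    unfolding Q_def by (rule measurable_bind_prob_space2[OF Km ret])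
  have PSin: "PS \<in> space (prob_algebra PS)" by (simp add: space_prob_algebra PSp)
  define PSH where "PSH = joint_dist PS HS K"
  define PH where "PH = output_dist PS K"
  have PSH_eq: "PSH = PS \<bind> Q" by (simp add: PSH_def joint_dist_def Q_def)
  have PH_eq: "PH = PS \<bind> K" by (simp add: PH_def output_dist_def)
  have PSHp: "prob_space PSH" unfolding PSH_eq by (rule prob_space_bind'[OF PSin Qm])
  have setsPSH0: "sets PSH = sets (PS \<Otimes>\<^sub>M HS)" unfolding PSH_eq by (rule sets_bind'[OF PSin Qm])
  have PHp: "prob_space PH" unfolding PH_eq by (rule prob_space_bind'[OF PSin Km])
  have setsPH: "sets PH = sets HS" unfolding PH_eq by (rule sets_bind'[OF PSin Km])
  have spacePH: "space PH = space HS" using setsPH by (rule sets_eq_imp_space_eq)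
  have setsP: "sets (PS \<Otimes>\<^sub>M PH) = sets (PS \<Otimes>\<^sub>M HS)" by (rule sets_pair_measure_cong[OF refl setsPH])
  have setsPSH: "sets PSH = sets (PS \<Otimes>\<^sub>M PH)" using setsPSH0 setsP by simp
  have spacePSH: "space PSH = space (PS \<Otimes>\<^sub>M PH)" using setsPSH by (rule sets_eq_imp_space_eq)
  have ac': "absolutely_continuous (PS \<Otimes>\<^sub>M PH) PSH" using ac by (simp add: PS_def PH_def PSH_def)
  interpret SH: prob_space PSH by fact
  define M where "M = exp_max_leakage PS HS K"
  have M_eq: "M = (\<integral>\<^sup>+ h. esssup PS (\<lambda>s. RN_deriv (PS \<Otimes>\<^sub>M PH) PSH (s,h)) \<partial>PH)"
    by (simp add: M_def exp_max_leakage_def PH_def PSH_def)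
  note LB = leak_bound[OF PSp PHp setsPSH ac', folded M_eq]
  have M1: "1 \<le> M"
  proof -
    have "emeasure PSH (space (PS \<Otimes>\<^sub>M PH)) \<le> ennreal 1 * M"
    proof (rule LB)
      fix h assume h: "h \<in> space PH"
      have "{s \<in> space PS. (s, h) \<in> space (PS \<Otimes>\<^sub>M PH)} = space PS"
        using h by (auto simp: space_pair_measure)
      then show "emeasure PS {s \<in> space PS. (s, h) \<in> space (PS \<Otimes>\<^sub>M PH)} \<le> ennreal 1"
        by (simp add: S.emeasure_space_1)
    qed auto
    then show ?thesis using SH.emeasure_space_1 spacePSH by simp
  qed
  show ?thesis
  proof (cases "M = \<infinity>")
    case True
    then show ?thesis using part1 by (simp add: M_def PS_def)
  next
    case False
    then obtain A where A: "M = ennreal A" "A \<ge> 0" by (cases M) auto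
    have A1: "A \<ge> 1" using M1 A by (simp add: ennreal_le_iff)  
    have Leq: "max_leakage PS HS K = ln A"
      using A by (simp add: max_leakage_def M_def[symmetric])
    define L where "L = ln 2 + ln A"
    have L: "L > 0" using A1 by (simp add: L_def add_pos_nonneg)
    have Aexp: "2 * A = exp L" using A1 by (simp add: L_def exp_add)
    define c where "c = sqrt (2 * real n)"
    have c: "c > 0" using n by (simp add: c_def)
    have c2: "c^2 = 2 * real n" by (simp add: c_def)
    define e0 where "e0 = sqrt L / c"
    have e0: "e0 > 0" using L c by (simp add: e0_def)
    have e0sq: "2 * real n * e0^2 = L"
      using L c c2 n by (simp add: e0_def power_divide)
    define r where "r = 4 * real n * e0"
    have r: "r > 0" using n e0 by (simp add: r_def)
    define X where "X = (\<lambda>p. \<bar>emp_risk n (fst p) (snd p) - true_risk D (snd p)\<bar>)"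
    have trm: "(\<lambda>h. true_risk D h) \<in> borel_measurable HS"
    proof -
      have "(\<lambda>h. \<integral>z. zero_one_loss h z \<partial>D) \<in> borel_measurable HS"
        using loss_meas by (intro D.borel_measurable_lebesgue_integral) simp
      then show ?thesis
        by (rule measurable_cong[THEN iffD1, rotated]) (simp add: true_risk_integral[OF D lm])
    qed
    have lossi: "(\<lambda>p. zero_one_loss (snd p) (fst p i)) \<in> borel_measurable (PS \<Otimes>\<^sub>M HS)" if i: "i < n" for i
    proof -
      have "(\<lambda>p. (snd p, fst p i)) \<in> PS \<Otimes>\<^sub>M HS \<rightarrow>\<^sub>M HS \<Otimes>\<^sub>M D"
        using i by (intro measurable_Pair measurable_snd measurable_compose[OF measurable_fst])
          (auto simp: PS_def sample_dist_def intro!: measurable_component_singleton)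
      from measurable_compose[OF this loss_meas] show ?thesis by simp
    qed
    have Xm: "X \<in> borel_measurable (PS \<Otimes>\<^sub>M HS)"
      unfolding X_def emp_risk_def
      by (intro borel_measurable_abs borel_measurable_diff borel_measurable_divide borel_measurable_sum
            lossi measurable_compose[OF measurable_snd trm]) auto
    have XmH[measurable]: "X \<in> borel_measurable PSH" by (subst measurable_cong_sets[OF setsPSH0 refl]) (rule Xm)
    have XmP[measurable]: "X \<in> borel_measurable (PS \<Otimes>\<^sub>M PH)" by (subst measurable_cong_sets[OF setsP refl]) (rule Xm)
    have Xnn: "0 \<le> X p" for p by (simp add: X_def)
    have tail: "emeasure PSH {p \<in> space PSH. t < X p} \<le> ennreal (exp (- r * (t - e0)))" if t: "t > e0" for t
    proof -
      have t0: "t > 0" using t e0 by simp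
      define E where "E = {p \<in> space (PS \<Otimes>\<^sub>M PH). t < X p}"
      have E: "E \<in> sets (PS \<Otimes>\<^sub>M PH)" unfolding E_def by measurable
      have "emeasure PSH E \<le> ennreal (2 * exp (- 2 * t\<^sup>2 * real n)) * M"
      proof (rule LB[OF E])
        show "0 < 2 * exp (- 2 * t\<^sup>2 * real n)" by simp
        fix h assume h: "h \<in> space PH"
        have "{s \<in> space PS. (s,h) \<in> E} = {s \<in> space PS. \<bar>emp_risk n s h - true_risk D h\<bar> > t}"
          using h by (auto simp: space_pair_measure X_def E_def)
        then show "emeasure PS {s \<in> space PS. (s,h) \<in> E} \<le> ennreal (2 * exp (- 2 * t\<^sup>2 * real n))"
        proof -
          have "S.prob {s \<in> space PS. \<bar>emp_risk n s h - true_risk D h\<bar> > t} \<le> 2 * exp (- 2 * t\<^sup>2 * real n)"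
            using part1 h spacePH t0 unfolding PS_def by auto
          then show ?thesis using \<open>{s \<in> space PS. (s,h) \<in> E} = _\<close>
            by (simp add: S.emeasure_eq_measure ennreal_leI)
        qed
      qed
      also have "\<dots> = ennreal (2 * exp (- 2 * t\<^sup>2 * real n) * A)" using A by (simp add: ennreal_mult)
      also have "\<dots> \<le> ennreal (exp (- r * (t - e0)))"
      proof (rule ennreal_leI)
        have "2 * exp (- 2 * t\<^sup>2 * real n) * A = exp (L - 2 * t\<^sup>2 * real n)"
          using Aexp by (simp add: exp_diff exp_minus field_simps)
        also have "\<dots> \<le> exp (- r * (t - e0))"
        proof (subst exp_le_cancel_iff)
          have "0 \<le> 2 * real n * (t - e0)^2" by simp
          then show "L - 2 * t\<^sup>2 * real n \<le> - r * (t - e0)"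
            unfolding e0sq[symmetric] r_def by (simp add: algebra_simps power2_eq_square)
        qed
        finally show "2 * exp (- 2 * t\<^sup>2 * real n) * A \<le> exp (- r * (t - e0))" .
      qed
      finally show ?thesis using spacePSH by (simp add: E_def)
    qed
    define B where "B = (\<lambda>t::real. indicator {0..e0} t + ennreal (exp (- r * (t - e0))) * indicator {e0..} t :: ennreal)"
    have Bbound: "(\<integral>\<^sup>+ p. ennreal (X p) \<partial>PSH) \<le> ennreal (e0 + 1/r)"
    proof -
      define g where "g = (\<lambda>x::((nat \<Rightarrow> 'x \<times> 'y) \<times> ('x \<Rightarrow> 'y)) \<times> real. if 0 \<le> snd x \<and> snd x < X (fst x) then 1 else (0::ennreal))"
      interpret PL: pair_sigma_finite PSH lborel ..
      have gm: "g \<in> borel_measurable (PSH \<Otimes>\<^sub>M lborel)" unfolding g_def by measurable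
      have "(\<integral>\<^sup>+ p. ennreal (X p) \<partial>PSH) = (\<integral>\<^sup>+ p. (\<integral>\<^sup>+ t. g (p,t) \<partial>lborel) \<partial>PSH)"
      proof (intro nn_integral_cong)
        fix p
        have "(\<integral>\<^sup>+ t. g (p,t) \<partial>lborel) = (\<integral>\<^sup>+ t. indicator {0..<X p} t \<partial>lborel)"
          by (intro nn_integral_cong) (auto simp: g_def indicator_def)
        also have "\<dots> = ennreal (X p)" using Xnn[of p] by simp
        finally show "ennreal (X p) = (\<integral>\<^sup>+ t. g (p,t) \<partial>lborel)" by simp
      qed
      also have "\<dots> = (\<integral>\<^sup>+ t. (\<integral>\<^sup>+ p. g (p,t) \<partial>PSH) \<partial>lborel)" by (rule PL.Fubini[OF gm, symmetric])
      also have "\<dots> \<le> (\<integral>\<^sup>+ t. B t \<partial>lborel)"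
      proof (rule nn_integral_mono)
        fix t :: real
        consider "t < 0" | "0 \<le> t" "t \<le> e0" | "e0 < t" by linarith
        then show "(\<integral>\<^sup>+ p. g (p,t) \<partial>PSH) \<le> B t"
        proof cases
          case 1 then show ?thesis by (simp add: g_def)
        next
          case 2
          have "(\<integral>\<^sup>+ p. g (p,t) \<partial>PSH) \<le> (\<integral>\<^sup>+ p. 1 \<partial>PSH)" by (intro nn_integral_mono) (simp add: g_def)
          also have "\<dots> = 1" using SH.emeasure_space_1 by simp
          also have "\<dots> \<le> B t" using 2 by (simp add: B_def)
          finally show ?thesis .
        next
          case 3
          have "(\<integral>\<^sup>+ p. g (p,t) \<partial>PSH) = (\<integral>\<^sup>+ p. indicator {p\<in>space PSH. t < X p} p \<partial>PSH)"
            using 3 e0 by (intro nn_integral_cong) (auto simp: g_def indicator_def)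
          also have "\<dots> = emeasure PSH {p\<in>space PSH. t < X p}" by (intro nn_integral_indicator) measurable
          also have "\<dots> \<le> ennreal (exp (- r * (t - e0)))" by (rule tail[OF 3])
          also have "\<dots> \<le> B t" using 3 by (simp add: B_def)
          finally show ?thesis .
        qed
      qed
      also have "\<dots> = (\<integral>\<^sup>+ t. indicator {0..e0} t \<partial>lborel) + (\<integral>\<^sup>+ t. ennreal (exp (- r * (t - e0))) * indicator {e0..} t \<partial>lborel)"
        unfolding B_def by (rule nn_integral_add) measurable
      also have "(\<integral>\<^sup>+ t. indicator {0..e0} t \<partial>lborel) = ennreal e0" using e0 by simp
      also have "(\<integral>\<^sup>+ t. ennreal (exp (- r * (t - e0))) * indicator {e0..} t \<partial>lborel) = ennreal (1/r)"
      proof -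
        have "(\<integral>\<^sup>+ t. ennreal (exp (- r * (t - e0))) * indicator {e0..} t \<partial>lborel) = ennreal (0 - (- exp (- r * (e0 - e0)) / r))"
        proof (rule nn_integral_FTC_atLeast[where F="\<lambda>t. - exp (- r * (t - e0)) / r" and T=0])
          show "(\<lambda>t. exp (- r * (t - e0))) \<in> borel_measurable borel" by measurable
          show "DERIV (\<lambda>t. - exp (- r * (t - e0)) / r) x :> exp (- r * (x - e0))" for x
            using r by (auto intro!: derivative_eq_intros simp: field_simps)
          show "0 \<le> exp (-r*(x-e0))" for x by simp
          show "((\<lambda>t. - exp (- r * (t - e0)) / r) \<longlongrightarrow> 0) at_top"
            using r by real_asymp
        qed
        then show ?thesis by simp
      qed
      finally show ?thesis using e0 r by (simp add: ennreal_plus)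
    qed
    have intX: "(\<integral>p. X p \<partial>PSH) \<le> e0 + 1/r"
    proof -
      have "(\<integral>p. X p \<partial>PSH) = enn2real (\<integral>\<^sup>+ p. ennreal (X p) \<partial>PSH)"
        by (rule integral_eq_nn_integral) (auto simp: Xnn)
      also have "\<dots> \<le> e0 + 1/r" using Bbound e0 r
        by (simp add: enn2real_leI)
      finally show ?thesis .
    qed
    have rr: "r = 2 * c * sqrt L"
      using c c2 by (simp add: r_def e0_def power2_eq_square field_simps)
    have rhs: "e0 + 1/r = 1 / c * (sqrt L + 1 / (2 * sqrt L))"
      using c L by (simp add: rr e0_def field_simps)
    have "(\<integral>p. \<bar>emp_risk n (fst p) (snd p) - true_risk D (snd p)\<bar> \<partial>joint_dist (sample_dist n D) HS K)
          \<le> 1 / sqrt (2 * real n) *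
             (sqrt (ln 2 + max_leakage (sample_dist n D) HS K)
              + 1 / (2 * sqrt (ln 2 + max_leakage (sample_dist n D) HS K)))"
      using intX rhs Leq unfolding X_def PSH_def PS_def c_def L_def by simp
    then show ?thesis using part1 by simp
  qed
qed

end
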